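(* Let $p$ be an odd prime and $n\ge1$ an integer, and let $K_n$ be the complete graph of order $n$. Put $q=\lfloor n/p\rfloor$, $r=n-qp$, $\psi=\max\{0,2r-p+1\}$, $\delta_s=1$ if $s$ is even and $0$ otherwise, and $\mathcal S=\mathcal S_1+\mathcal S_2$ with $$\mathcal S_1=\sum_{\substack{s=2\\ s\ne p}}^{r+1}(s-1-\delta_s)(s/p),\qquad \mathcal S_2=\sum_{\substack{s=r+2\\ s\ne p}}^{2r}(2r-s+1-\delta_s)(s/p).$$ Then $K_n$ is a Legendre cordial graph modulo $p$ if and only if $$\mathcal S=2nq-pq^2-q+\psi\quad\text{or}\quad \mathcal S=2nq-pq^2-q+\psi\pm2.$$
   Context: For an odd prime $p$ and an integer $a$ not divisible by $p$, $(a/p)$ denotes the Legendre symbol: $1$ if $a$ is a quadratic residue mod $p$, $-1$ otherwise. Empty sums equal $0$. For a simple connected graph $G$ of order $n$, a bijection $f:V(G)\to\{1,\dots,n\}$ is a Legendre cordial labeling modulo $p$ if the induced edge labeling $f_p^*:E(G)\to\{0,1\}$, defined by $f_p^*(uv)=0$ if $p\mid f(u)+f(v)$ or $((f(u)+f(v))/p)=-1$, and $f_p^*(uv)=1$ if $((f(u)+f(v))/p)=1$, satisfies $|e_{f_p^*}(0)-e_{f_p^*}(1)|\le1$, where $e_{f_p^*}(i)$ is the number of edges with label $i$. A graph admitting such a labeling is a Legendre cordial graph modulo $p$. *)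

theory Defs
  imports "HOL-Number_Theory.Number_Theory"
begin

definition simple_graph :: "'a set \<Rightarrow> 'a set set \<Rightarrow> bool" where
  "simple_graph V E \<longleftrightarrow> finite V \<and> (\<forall>e\<in>E. e \<subseteq> V \<and> card e = 2)"

definition complete_graph_edges :: "'a set \<Rightarrow> 'a set set" where
  "complete_graph_edges V = {e. e \<subseteq> V \<and> card e = 2}"

text \<open>Induced edge label of edge e = {u,v}: 1 iff (f u + f v / p) = 1, else 0
  (i.e. 0 when p divides f u + f v or the symbol is -1).
  For a 2-element set e, the sum over e is f u + f v.\<close>

definition legendre_edge_label :: "nat \<Rightarrow> ('a \<Rightarrow> nat) \<Rightarrow> 'a set \<Rightarrow> nat" where
  "legendre_edge_label p f e =
     (if Legendre (int (\<Sum>x\<in>e. f x)) (int p) = 1 then 1 else 0)"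

definition legendre_cordial_labeling ::
  "'a set \<Rightarrow> 'a set set \<Rightarrow> nat \<Rightarrow> ('a \<Rightarrow> nat) \<Rightarrow> bool" where
  "legendre_cordial_labeling V E p f \<longleftrightarrow>
     bij_betw f V {1..card V} \<and>
     \<bar>int (card {e\<in>E. legendre_edge_label p f e = 0})
       - int (card {e\<in>E. legendre_edge_label p f e = 1})\<bar> \<le> 1"

definition legendre_cordial_graph :: "'a set \<Rightarrow> 'a set set \<Rightarrow> nat \<Rightarrow> bool" where
  "legendre_cordial_graph V E p \<longleftrightarrow> (\<exists>f. legendre_cordial_labeling V E p f)"

end

theory Submission
  imports Defs
begin

lemma Legendre_cong_eq:
  assumes "[a = b] (mod m)"
  shows "Legendre a m = Legendre b m"
proof -
  have 1: "[a = 0] (mod m) \<longleftrightarrow> [b = 0] (mod m)"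
    using assms cong_sym cong_trans by blast
  have 2: "QuadRes m a \<longleftrightarrow> QuadRes m b"
    unfolding QuadRes_def using assms cong_sym cong_trans by blast
  show ?thesis unfolding Legendre_def using 1 2 by simp
qed

lemma Legendre_periodic: "Legendre (a + m) m = Legendre a m"
  by (rule Legendre_cong_eq) (simp add: cong_def)

lemma Legendre_zero_iff: "Legendre a m = 0 \<longleftrightarrow> m dvd a"
  unfolding Legendre_def by (simp add: cong_0_iff)

lemma Legendre_vals: "Legendre a m = 0 \<or> Legendre a m = 1 \<or> Legendre a m = -1"
  unfolding Legendre_def by auto

lemma sq_inj:
  fixes p :: int
  assumes "prime p" "y \<in> {1..(p-1) div 2}" "z \<in> {1..(p-1) div 2}" "y^2 mod p = z^2 mod p"
  shows "y = z"
proof -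
  have "p dvd (y - z) * (y + z)"
    using assms(4) by (metis mod_eq_dvd_iff power2_eq_square square_diff_square_factored mult.commute)
  then have "p dvd (y - z) \<or> p dvd (y + z)"
    using assms(1) prime_dvd_mult_iff by blast
  moreover have "\<not> p dvd (y + z)"
  proof -
    have "2 * ((p-1) div 2) \<le> p - 1" by simp
    then have "y + z < p" "0 < y + z" using assms(2,3) by auto
    then show ?thesis using zdvd_not_zless by blast
  qed
  moreover have "p dvd (y - z) \<Longrightarrow> y = z"
  proof -
    assume d: "p dvd (y - z)"
    show "y = z"
    proof (rule ccontr)
      assume "y \<noteq> z"
      then have "\<bar>y - z\<bar> > 0" by simp
      moreover have "p dvd \<bar>y - z\<bar>" using d by simp
      ultimately have "p \<le> \<bar>y - z\<bar>" using zdvd_imp_le by blast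
      then show False using assms(2,3) by auto
    qed
  qed
  ultimately show ?thesis by blast
qed

lemma QR_set:
  fixes p :: int
  assumes "prime p" "odd p"
  shows "{a\<in>{1..p-1}. QuadRes p a} = (\<lambda>y. y^2 mod p) ` {1..(p-1) div 2}"
proof
  have p2: "p > 2" using assms prime_ge_2_int[of p] by (metis even_numeral order_le_less)
  show "(\<lambda>y. y^2 mod p) ` {1..(p-1) div 2} \<subseteq> {a\<in>{1..p-1}. QuadRes p a}"
  proof
    fix a assume "a \<in> (\<lambda>y. y^2 mod p) ` {1..(p-1) div 2}"
    then obtain y where y: "y \<in> {1..(p-1) div 2}" "a = y^2 mod p" by blast
    have "2 * ((p-1) div 2) \<le> p - 1" by simp
    then have "\<not> p dvd y" using y(1) zdvd_not_zless[of y p] by auto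
    then have "\<not> p dvd y^2" using assms(1) prime_dvd_power_int_iff by (metis pos2 prime_dvd_power)
    then have "a \<noteq> 0" using y(2) by auto
    moreover have "a \<ge> 0" "a < p" using y(2) p2 by auto
    moreover have "QuadRes p a" unfolding QuadRes_def using y(2) by (auto simp: cong_def)
    ultimately show "a \<in> {a\<in>{1..p-1}. QuadRes p a}" by auto
  qed
  show "{a\<in>{1..p-1}. QuadRes p a} \<subseteq> (\<lambda>y. y^2 mod p) ` {1..(p-1) div 2}"
  proof
    fix a assume a: "a \<in> {a\<in>{1..p-1}. QuadRes p a}"
    then obtain y where y: "[y^2 = a] (mod p)" unfolding QuadRes_def by blast
    define y0 where "y0 = y mod p"
    have amod: "a mod p = a" using a by auto
    have y0a: "y0^2 mod p = a" using y amod unfolding y0_def cong_def by (simp add: power_mod)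
    have "y0 \<noteq> 0" using y0a a by auto
    moreover have "y0 \<ge> 0" "y0 < p" using p2 unfolding y0_def by auto
    ultimately have r: "1 \<le> y0" "y0 \<le> p - 1" by auto
    show "a \<in> (\<lambda>y. y^2 mod p) ` {1..(p-1) div 2}"
    proof (cases "y0 \<le> (p-1) div 2")
      case True
      then show ?thesis using r y0a by (intro image_eqI[of _ _ y0]) auto
    next
      case False
      have "(p - y0)^2 mod p = y0^2 mod p"
        by (simp add: power2_eq_square algebra_simps mod_eq_dvd_iff)
      then show ?thesis using r y0a False assms(2) by (intro image_eqI[of _ _ "p - y0"]) (auto elim!: oddE)
    qed
  qed
qed

lemma sum_int_nat_ivl: "(\<Sum>k<m. f (int k)) = (\<Sum>a\<in>{0..<int m}. f a)"
proof -
  have "(\<Sum>a\<in>{0..<int m}. f a) = (\<Sum>a\<in>int ` {0..<m}. f a)"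
    by (simp add: image_int_atLeastLessThan)
  also have "\<dots> = (\<Sum>k\<in>{0..<m}. f (int k))" by (simp add: sum.reindex)
  finally show ?thesis by (simp add: atLeast0LessThan)
qed

lemma Legendre_sum_period:
  fixes p :: nat
  assumes "prime p" "odd p"
  shows "(\<Sum>k<p. Legendre (int k) (int p)) = 0"
proof -
  define P where "P = int p"
  have pP: "prime P" "odd P" using assms unfolding P_def by auto
  have p2: "P > 2" using pP prime_ge_2_int[of P] by (metis even_numeral order_le_less)
  define A where "A = {1..P-1}"
  define Q where "Q = {a\<in>A. QuadRes P a}"
  have cQ: "card Q = nat ((P-1) div 2)"
  proof -
    have "Q = (\<lambda>y. y^2 mod P) ` {1..(P-1) div 2}" unfolding Q_def A_def using QR_set[OF pP] .
    moreover have "inj_on (\<lambda>y. y^2 mod P) {1..(P-1) div 2}"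
      using sq_inj[OF pP(1)] by (auto intro!: inj_onI)
    ultimately show ?thesis by (simp add: card_image)
  qed
  have fA: "finite A" unfolding A_def by simp
  have QA: "Q \<subseteq> A" unfolding Q_def by auto
  have cA: "card A = nat (P - 1)" unfolding A_def by simp
  have "(\<Sum>k<p. Legendre (int k) (int p)) = (\<Sum>a\<in>{0..<P}. Legendre a P)"
    unfolding P_def by (rule sum_int_nat_ivl)
  also have "{0..<P} = insert 0 A" unfolding A_def using p2 by auto
  also have "(\<Sum>a\<in>insert 0 A. Legendre a P) = (\<Sum>a\<in>A. Legendre a P)"
    using fA by (simp add: A_def Legendre_def cong_0_iff)
  also have "\<dots> = (\<Sum>a\<in>A. if a \<in> Q then 1 else -1)"
  proof (rule sum.cong)
    fix a assume a: "a \<in> A"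
    then have "\<not> P dvd a" unfolding A_def using zdvd_not_zless[of a P] by auto
    then show "Legendre a P = (if a \<in> Q then 1 else -1)"
      using a unfolding Legendre_def Q_def by (auto simp: cong_0_iff)
  qed simp
  also have "\<dots> = int (card Q) - int (card (A - Q))"
    using fA QA by (simp add: sum.If_cases Int_absorb1 Diff_eq[symmetric] Int_commute)
  also have "\<dots> = 0"
  proof -
    have "card (A - Q) = card A - card Q" using fA QA by (simp add: card_Diff_subset finite_subset)
    then show ?thesis using cQ cA p2 pP(2) by (auto elim!: oddE)
  qed
  finally show ?thesis .
qed

lemma shift_sum_periodic:
  fixes f :: "int \<Rightarrow> int"
  assumes per: "\<And>s. f (s + int p) = f s"
  shows "(\<Sum>k<p. f (m + int k)) = (\<Sum>k<p. f (int k))"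
proof -
  define F where "F m = (\<Sum>k<p. f (m + int k))" for m
  have step: "F (m + 1) = F m" for m
  proof (cases p)
    case 0 then show ?thesis by (simp add: F_def)
  next
    case (Suc p')
    define g where "g k = f (m + 1 + int k)" for k
    have "F (m+1) = (\<Sum>k<Suc p'. g k)" unfolding F_def Suc g_def by simp
    also have "\<dots> = (\<Sum>k<p'. g k) + g p'" by simp
    also have "g p' = f m" unfolding g_def using per[of m] Suc by (simp add: add.assoc)
    also have "(\<Sum>k<p'. g k) = (\<Sum>k<p'. f (m + int (Suc k)))" unfolding g_def by (simp add: add.assoc)
    also have "\<dots> + f m = F m" unfolding F_def Suc by (subst sum.lessThan_Suc_shift) simp
    finally show ?thesis .
  qed
  have "F m = F 0"
  proof (induction m rule: int_induct[where k=0])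
    case base then show ?case by simp
  next
    case (step1 i) then show ?case using step by simp
  next
    case (step2 i) then show ?case using step[of "i - 1"] by simp
  qed
  then show ?thesis by (simp add: F_def)
qed

definition ind :: "nat \<Rightarrow> int \<Rightarrow> int" where "ind p s = (if int p dvd s then 1 else 0)"
definition hh :: "nat \<Rightarrow> int \<Rightarrow> int" where "hh p s = ind p s - Legendre s (int p)"

lemma hh_periodic: "hh p (s + int p) = hh p s"
  unfolding hh_def ind_def using Legendre_periodic[of s "int p"] by simp

lemma ind_sum_period:
  assumes "p > 0"
  shows "(\<Sum>k<p. ind p (int k)) = 1"
proof -
  obtain p' where p: "p = Suc p'" using assms not0_implies_Suc by blast
  have "(\<Sum>k<p'. ind p (int (Suc k))) = 0"
  proof (rule sum.neutral, rule ballI)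
    fix k assume "k \<in> {..<p'}"
    then have "0 < int (Suc k)" "int (Suc k) < int p" using p by auto
    then have "\<not> int p dvd int (Suc k)" using zdvd_not_zless by blast
    then show "ind p (int (Suc k)) = 0" unfolding ind_def by simp
  qed
  then show ?thesis unfolding p by (subst sum.lessThan_Suc_shift) (simp add: ind_def)
qed

lemma hh_sum_period:
  assumes "prime p" "odd p"
  shows "(\<Sum>k<p. hh p (m + int k)) = 1"
proof -
  have "(\<Sum>k<p. hh p (m + int k)) = (\<Sum>k<p. hh p (int k))"
    by (rule shift_sum_periodic) (rule hh_periodic)
  also have "\<dots> = (\<Sum>k<p. ind p (int k)) - (\<Sum>k<p. Legendre (int k) (int p))"
    unfolding hh_def by (simp add: sum_subtractf)
  also have "\<dots> = 1" using ind_sum_period[of p] Legendre_sum_period[OF assms] assms(1)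
    by (simp add: prime_gt_0_nat)
  finally show ?thesis .
qed

definition PP :: "(int \<Rightarrow> int) \<Rightarrow> int \<Rightarrow> nat \<Rightarrow> int" where
  "PP f t N = (\<Sum>j<N. \<Sum>i<j. f (t + int i + int j))"

lemma PP_Suc: "PP f t (Suc N) = PP f t N + (\<Sum>i<N. f (t + int i + int N))"
  unfolding PP_def by simp

lemma PP_shift: "PP f t (Suc N) = PP f (t+2) N + (\<Sum>j<N. f (t + int j + 1))"
proof (induction N)
  case 0 then show ?case by (simp add: PP_def)
next
  case (Suc N)
  have A: "PP f t (Suc (Suc N)) = PP f t (Suc N) + (\<Sum>i<Suc N. f (t + int i + int (Suc N)))"
    by (rule PP_Suc)
  have eq: "(\<Sum>i<Suc N. f (t + int i + int (Suc N))) = f (t + int N + 1) + (\<Sum>i<N. f (t + 2 + int i + int N))"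
    by (subst sum.lessThan_Suc_shift) (simp add: add_ac)
  have B: "PP f (t+2) (Suc N) + (\<Sum>j<Suc N. f (t + int j + 1)) = PP f (t+2) N + (\<Sum>i<N. f (t + 2 + int i + int N)) + (\<Sum>j<N. f (t + int j + 1)) + f (t + int N + 1)"
    by (simp add: PP_Suc)
  show ?case using A eq B Suc.IH by linarith
qed

lemma sum_lessThan_twice: "2 * (\<Sum>j<N. int j) = int N * (int N - 1)"
  by (induction N) (auto simp: algebra_simps)

lemma PP_const:
  fixes f :: "int \<Rightarrow> int"
  assumes per: "\<And>s. f (s + int p) = f s"
    and tot: "\<And>c. (\<Sum>k<p. f (c + int k)) = 1"
    and odd: "odd p"
  shows "2 * PP f (int k) p = int p - 1"
proof -
  have s2: "PP f (t + 2) p = PP f t p" for t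
  proof -
    have "PP f t (Suc p) = PP f (t+2) p + (\<Sum>j<p. f (t + 1 + int j))"
      using PP_shift[of f t p] by (simp add: add_ac)
    moreover have "PP f t (Suc p) = PP f t p + (\<Sum>i<p. f (t + int p + int i))"
      using PP_Suc[of f t p] by (simp add: add_ac)
    ultimately show ?thesis using tot[of "t+1"] tot[of "t + int p"] by simp
  qed
  have sp: "PP f (t + int p) p = PP f t p" for t
    unfolding PP_def
  proof (intro sum.cong refl)
    fix j i
    show "f (t + int p + int i + int j) = f (t + int i + int j)"
      using per[of "t + int i + int j"] by (simp add: add_ac)
  qed
  have s2k: "PP f (t + 2 * int j) p = PP f t p" for t j
  proof (induction j)
    case 0 then show ?case by simp
  next
    case (Suc j) then show ?case using s2[of "t + 2 * int j"] by (simp add: algebra_simps)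
  qed
  have s1: "PP f (t + 1) p = PP f t p" for t
  proof -
    obtain j where j: "p = 2 * j + 1" using odd oddE by blast
    have "PP f (t + 1) p = PP f (t + 1 + int p) p" using sp[of "t+1"] by simp
    also have "t + 1 + int p = t + 2 * int (j + 1)" using j by simp
    finally show ?thesis using s2k[of t "j+1"] by simp
  qed
  have sk: "PP f (int k) p = PP f 0 p" for k
  proof (induction k)
    case (Suc k) then show ?case using s1[of "int k"] by (simp add: add.commute)
  qed simp
  have "(\<Sum>m<p. PP f (int m) p) = int p * PP f 0 p" using sk by simp
  moreover have "(\<Sum>m<p. PP f (int m) p) = (\<Sum>j<p. \<Sum>i<j. \<Sum>m<p. f (int i + int j + int m))"
  proof -
    have "(\<Sum>m<p. PP f (int m) p) = (\<Sum>m<p. \<Sum>j<p. \<Sum>i<j. f (int m + int i + int j))"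
      unfolding PP_def by simp
    also have "\<dots> = (\<Sum>j<p. \<Sum>m<p. \<Sum>i<j. f (int m + int i + int j))" by (rule sum.swap)
    also have "\<dots> = (\<Sum>j<p. \<Sum>i<j. \<Sum>m<p. f (int m + int i + int j))"
      by (rule sum.cong[OF refl], rule sum.swap)
    also have "\<dots> = (\<Sum>j<p. \<Sum>i<j. \<Sum>m<p. f (int i + int j + int m))"
      by (simp add: add_ac)
    finally show ?thesis .
  qed
  moreover have "\<dots> = (\<Sum>j<p. int j)" using tot by simp
  ultimately have e: "(\<Sum>j<p. int j) = int p * PP f 0 p" by linarith
  have "2 * (int p * PP f 0 p) = int p * (int p - 1)" by (metis e sum_lessThan_twice)
  then have "int p * (2 * PP f 0 p) = int p * (int p - 1)" by (simp add: algebra_simps)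
  moreover have "int p \<noteq> 0" using odd by (cases p) auto
  ultimately have "2 * PP f 0 p = int p - 1" by simp
  then show ?thesis using sk by simp
qed

fun EE :: "(int \<Rightarrow> int) \<Rightarrow> nat \<Rightarrow> int" where
  "EE x 0 = 0"
| "EE x (Suc n) = EE x n + (\<Sum>a<n. x (int a + int n + 2))"

lemma EE_add: "EE x (m + k) = EE x m + (\<Sum>j<k. \<Sum>a<m+j. x (int a + int (m+j) + 2))"
  by (induction k) simp_all

lemma sum_split_add: "(\<Sum>a<m+(j::nat). g a) = (\<Sum>a<m. g a) + (\<Sum>i<j. g (m+i))"
  by (induction j) (simp_all add: add_ac)

lemma EE_diff: "EE (\<lambda>s. f s - g s) n = EE f n - EE g n"
  by (induction n) (simp_all add: sum_subtractf)

lemma EE_step_p: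
  assumes "prime p" "odd p"
  shows "2 * EE (hh p) (m + p) = 2 * EE (hh p) m + 2 * int m + int p - 1"
proof -
  let ?h = "hh p"
  have "EE ?h (m + p) = EE ?h m + (\<Sum>j<p. (\<Sum>a<m. ?h (int a + int (m+j) + 2)) + (\<Sum>i<j. ?h (int (m+i) + int (m+j) + 2)))"
    unfolding EE_add sum_split_add ..
  also have "\<dots> = EE ?h m + (\<Sum>j<p. \<Sum>a<m. ?h (int a + int (m+j) + 2)) + (\<Sum>j<p. \<Sum>i<j. ?h (int (m+i) + int (m+j) + 2))"
    by (simp add: sum.distrib)
  also have "(\<Sum>j<p. \<Sum>a<m. ?h (int a + int (m+j) + 2)) = (\<Sum>a<m. \<Sum>j<p. ?h ((int a + int m + 2) + int j))"
    by (subst sum.swap) (simp add: add_ac)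
  also have "\<dots> = int m" using hh_sum_period[OF assms] by simp
  also have "(\<Sum>j<p. \<Sum>i<j. ?h (int (m+i) + int (m+j) + 2)) = PP ?h (int (2*m+2)) p"
    unfolding PP_def by (simp add: add_ac)
  finally have "EE ?h (m + p) = EE ?h m + int m + PP ?h (int (2*m+2)) p" .
  moreover have "2 * PP ?h (int (2*m+2)) p = int p - 1"
    by (rule PP_const) (auto simp: hh_periodic hh_sum_period[OF assms] assms(2))
  ultimately show ?thesis by simp
qed

lemma EE_qp:
  assumes "prime p" "odd p"
  shows "2 * EE (hh p) (q * p + r) = 2 * EE (hh p) r + 2 * int q * int r + int p * int q ^ 2 - int q"
proof (induction q)
  case 0 then show ?case by simp
next
  case (Suc q)
  have "Suc q * p + r = (q * p + r) + p" by simp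
  moreover have "2 * EE (hh p) ((q * p + r) + p) = 2 * EE (hh p) (q * p + r) + 2 * int (q * p + r) + int p - 1"
    by (rule EE_step_p[OF assms])
  ultimately have "2 * EE (hh p) (Suc q * p + r) = 2 * EE (hh p) (q * p + r) + 2 * int (q * p + r) + int p - 1"
    by metis
  then show ?case using Suc.IH by (simp add: algebra_simps power2_eq_square)
qed

definition cc :: "int \<Rightarrow> int \<Rightarrow> int" where
  "cc R s = (if 2 \<le> s \<and> s \<le> R + 1 then s - 1 - (if even s then 1 else 0) else 0)
          + (if R + 2 \<le> s \<and> s \<le> 2 * R then 2 * R - s + 1 - (if even s then 1 else 0) else 0)"

lemma sum_restrict_ivl:
  fixes f :: "int \<Rightarrow> int"
  assumes "0 \<le> a"  "b \<le> M"
  shows "(\<Sum>s\<in>{a..b}. f s) = (\<Sum>s\<in>{0..M}. if a \<le> s \<and> s \<le> b then f s else 0)"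
proof -
  have "(\<Sum>s\<in>{0..M}. if a \<le> s \<and> s \<le> b then f s else 0) = (\<Sum>s\<in>{0..M}. if s \<in> {a..b} then f s else 0)"
    by simp
  also have "\<dots> = (\<Sum>s\<in>{0..M} \<inter> {a..b}. f s)" by (rule sum.inter_restrict[symmetric]) simp
  also have "{0..M} \<inter> {a..b} = {a..b}" using assms by auto
  finally show ?thesis ..
qed

lemma G_as_cc:
  fixes x :: "int \<Rightarrow> int"
  assumes "2 * int r \<le> M"
  shows "(\<Sum>s\<in>{2..int r+1}. (s - 1 - (if even s then 1 else 0)) * x s)
       + (\<Sum>s\<in>{int r+2..2*int r}. (2*int r - s + 1 - (if even s then 1 else 0)) * x s)
       = (\<Sum>s\<in>{0..M}. cc (int r) s * x s)"
proof (cases "r = 0")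
  case True
  then show ?thesis by (auto simp: cc_def intro!: sum.neutral)
next
  case False
  have "(\<Sum>s\<in>{2..int r+1}. (s - 1 - (if even s then 1 else 0)) * x s)
     = (\<Sum>s\<in>{0..M}. if 2 \<le> s \<and> s \<le> int r + 1 then (s - 1 - (if even s then 1 else 0)) * x s else 0)"
    by (rule sum_restrict_ivl) (use assms False in auto)
  moreover have "(\<Sum>s\<in>{int r+2..2*int r}. (2*int r - s + 1 - (if even s then 1 else 0)) * x s)
     = (\<Sum>s\<in>{0..M}. if int r + 2 \<le> s \<and> s \<le> 2 * int r then (2*int r - s + 1 - (if even s then 1 else 0)) * x s else 0)"
    by (rule sum_restrict_ivl) (use assms in auto)
  moreover have "(\<Sum>s\<in>{0..M}. if 2 \<le> s \<and> s \<le> int r + 1 then (s - 1 - (if even s then 1 else 0)) * x s else 0)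
     + (\<Sum>s\<in>{0..M}. if int r + 2 \<le> s \<and> s \<le> 2 * int r then (2*int r - s + 1 - (if even s then 1 else 0)) * x s else 0)
     = (\<Sum>s\<in>{0..M}. cc (int r) s * x s)"
    unfolding sum.distrib[symmetric] by (rule sum.cong) (simp_all add: cc_def distrib_right)
  ultimately show ?thesis by simp
qed

lemma cc_step:
  assumes "0 \<le> R"
  shows "cc (R + 1) s = cc R s + (if R + 2 \<le> s \<and> s \<le> 2 * R + 1 then 2 else 0)"
  using assms unfolding cc_def by (auto split: if_splits) presburger+

lemma EE_diff_ivl:
  "(\<Sum>a<r. x (int a + int r + 2)) = (\<Sum>s\<in>{int r+2..2*int r+1}. x s)"
  by (rule sum.reindex_bij_witness[of _ "\<lambda>s. nat (s - int r - 2)" "\<lambda>a. int a + int r + 2"]) auto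

lemma G_EE:
  fixes x :: "int \<Rightarrow> int"
  shows "(\<Sum>s\<in>{0..2*int r+2}. cc (int r) s * x s) = 2 * EE x r"
proof (induction r)
  case 0 then show ?case by (auto simp: cc_def intro!: sum.neutral)
next
  case (Suc r)
  let ?M = "2 * int r + 2"
  have z: "(\<Sum>s\<in>{0..2*int r+4}. cc (int r) s * x s) = (\<Sum>s\<in>{0..?M}. cc (int r) s * x s)"
  proof -
    have "{0..2*int r+4} = {0..?M} \<union> {?M+1..2*int r+4}" by auto
    moreover have "(\<Sum>s\<in>{?M+1..2*int r+4}. cc (int r) s * x s) = 0"
      by (rule sum.neutral) (auto simp: cc_def)
    ultimately show ?thesis by (simp add: sum.union_disjoint)
  qed
  have "(\<Sum>s\<in>{0..2*int (Suc r)+2}. cc (int (Suc r)) s * x s)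
      = (\<Sum>s\<in>{0..2*int r+4}. (cc (int r) s + (if int r + 2 \<le> s \<and> s \<le> 2 * int r + 1 then 2 else 0)) * x s)"
    using cc_step[of "int r"] by (simp add: algebra_simps)
  also have "\<dots> = (\<Sum>s\<in>{0..2*int r+4}. cc (int r) s * x s) + 2 * (\<Sum>s\<in>{0..2*int r+4}. if int r + 2 \<le> s \<and> s \<le> 2 * int r + 1 then x s else 0)"
    unfolding sum_distrib_left sum.distrib[symmetric] by (rule sum.cong) (simp_all add: distrib_right)
  also have "(\<Sum>s\<in>{0..2*int r+4}. if int r + 2 \<le> s \<and> s \<le> 2 * int r + 1 then x s else 0) = (\<Sum>s\<in>{int r+2..2*int r+1}. x s)"
    by (rule sum_restrict_ivl[symmetric]) auto
  also note z
  also note Suc.IH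
  finally show ?case using EE_diff_ivl[of x r] by simp
qed

lemma G_EE':
  fixes x :: "int \<Rightarrow> int"
  shows "(\<Sum>s\<in>{2..int r+1}. (s - 1 - (if even s then 1 else 0)) * x s)
       + (\<Sum>s\<in>{int r+2..2*int r}. (2*int r - s + 1 - (if even s then 1 else 0)) * x s)
       = 2 * EE x r"
  using G_as_cc[of r "2*int r+2" x] G_EE[of r x] by simp

lemma dvd_range_int:
  fixes P x :: int
  assumes "0 < x" "x < 2 * P"
  shows "P dvd x \<longleftrightarrow> x = P"
proof
  assume "P dvd x"
  then obtain c where c: "x = P * c" by (auto elim!: dvdE)
  have P0: "P > 0" using assms by simp
  have "c > 0" using c assms P0 by (simp add: zero_less_mult_iff)
  moreover have "c < 2"
  proof -
    have "P * c < P * 2" using c assms by (simp add: mult.commute)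
    then show ?thesis using mult_less_cancel_left_pos[OF P0] by simp
  qed
  ultimately have "c = 1" by simp
  then show "x = P" using c by simp
qed simp

lemma ind_row:
  assumes "Suc r < p"
  shows "(\<Sum>a<r. ind p (int a + int r + 2)) = (if int p \<le> 2 * int r + 1 then 1 else 0)"
proof -
  have "(\<Sum>a<r. ind p (int a + int r + 2)) = (\<Sum>a<r. if a = p - r - 2 then 1 else 0)"
  proof (rule sum.cong)
    fix a assume "a \<in> {..<r}"
    then have "0 < int a + int r + 2" "int a + int r + 2 < 2 * int p" using assms by auto
    then have "int p dvd (int a + int r + 2) \<longleftrightarrow> int a + int r + 2 = int p" by (rule dvd_range_int)
    moreover have "int a + int r + 2 = int p \<longleftrightarrow> a = p - r - 2" using assms by auto
    ultimately show "ind p (int a + int r + 2) = (if a = p - r - 2 then 1 else 0)"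
      unfolding ind_def by simp
  qed simp
  also have "\<dots> = (if p - r - 2 \<in> {..<r} then 1 else 0)" by (rule sum.delta) simp
  also have "\<dots> = (if int p \<le> 2 * int r + 1 then 1 else 0)" using assms by auto
  finally show ?thesis .
qed

lemma ind_base:
  assumes "odd p"
  shows "r < p \<Longrightarrow> 2 * EE (ind p) r = max 0 (2 * int r - int p + 1)"
proof (induction r)
  case 0 then show ?case by simp
next
  case (Suc r)
  then have IH: "2 * EE (ind p) r = max 0 (2 * int r - int p + 1)" by simp
  have "2 * EE (ind p) (Suc r) = 2 * EE (ind p) r + 2 * (if int p \<le> 2 * int r + 1 then 1 else 0)"
    using ind_row[OF Suc.prems] by simp
  moreover have "int p \<noteq> 2 * int r + 2" using assms by presburger
  ultimately show ?case using IH by auto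
qed

lemma EE_as_double_sum:
  "(\<Sum>b\<in>{1..n}. \<Sum>a\<in>{1..<b}. g (int a + int b)) = EE g n"
proof (induction n)
  case 0 then show ?case by simp
next
  case (Suc n)
  have "(\<Sum>a\<in>{1..<Suc n}. g (int a + int (Suc n))) = (\<Sum>a<n. g (int a + int n + 2))"
    by (rule sum.reindex_bij_witness[of _ Suc "\<lambda>a. a - 1"]) (auto simp: add_ac)
  then show ?case using Suc by (simp add: atLeastAtMostSuc_conv add_ac)
qed

lemma edges_sum:
  fixes g :: "nat \<Rightarrow> int"
  shows "(\<Sum>e\<in>complete_graph_edges {1..n}. g (\<Sum>x\<in>e. x))
       = (\<Sum>b\<in>{1..n}. \<Sum>a\<in>{1..<b}. g (a + b))"
proof -
  have "(\<Sum>e\<in>complete_graph_edges {1..n}. g (\<Sum>x\<in>e. x)) = (\<Sum>(b,a)\<in>Sigma {1..n} (\<lambda>b. {1..<b}). g (a + b))"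
  proof (rule sum.reindex_bij_witness[of _ "\<lambda>(b,a). {a,b}" "\<lambda>e. (Max e, Min e)"])
    fix ba assume "ba \<in> Sigma {1..n} (\<lambda>b. {1..<b})"
    then obtain b a where ba: "ba = (b,a)" "1 \<le> a" "a < b" "b \<le> n" by auto
    show "(Max ((\<lambda>(b,a). {a,b}) ba), Min ((\<lambda>(b,a). {a,b}) ba)) = ba" using ba by auto
    show "(\<lambda>(b,a). {a,b}) ba \<in> complete_graph_edges {1..n}"
      using ba by (auto simp: complete_graph_edges_def)
  next
    fix e assume "e \<in> complete_graph_edges {1..n}"
    then have e: "e \<subseteq> {1..n}" "card e = 2" by (auto simp: complete_graph_edges_def)
    then obtain x y where xy: "e = {x,y}" "x < y"
      by (metis card_2_iff linorder_neqE_nat insert_commute)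
    show "(\<lambda>(b,a). {a,b}) (Max e, Min e) = e" using xy by auto
    show "(Max e, Min e) \<in> Sigma {1..n} (\<lambda>b. {1..<b})" using xy e by auto
    show "(\<lambda>(b,a). g (a + b)) (Max e, Min e) = g (\<Sum>x\<in>e. x)" using xy by (simp add: max_def min_def add.commute)
  qed
  also have "\<dots> = (\<Sum>b\<in>{1..n}. \<Sum>a\<in>{1..<b}. g (a + b))"
    by (simp add: sum.Sigma)
  finally show ?thesis .
qed

definition hl :: "nat \<Rightarrow> int \<Rightarrow> int" where
  "hl p s = (if Legendre s (int p) = 1 then -1 else 1)"

lemma hl_hh: "hl p s = hh p s"
  unfolding hl_def hh_def ind_def using Legendre_zero_iff[of s "int p"] Legendre_vals[of s "int p"]
  by auto

lemma card_diff_sum: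
  fixes E :: "'b set" and lab :: "'b \<Rightarrow> nat"
  assumes "finite E" "\<And>e. lab e = 0 \<or> lab e = 1"
  shows "int (card {e\<in>E. lab e = 0}) - int (card {e\<in>E. lab e = 1})
       = (\<Sum>e\<in>E. if lab e = 1 then -1 else 1)"
proof -
  have c: "int (card {e\<in>E. P e}) = (\<Sum>e\<in>E. if P e then 1 else 0)" for P
    using assms(1) by (simp add: sum.inter_filter[symmetric])
  have "(\<Sum>e\<in>E. if lab e = 1 then -1 else (1::int)) = (\<Sum>e\<in>E. (if lab e = 0 then 1 else 0) - (if lab e = 1 then 1 else 0))"
  proof (rule sum.cong)
    fix e show "(if lab e = 1 then -1 else (1::int)) = (if lab e = 0 then 1 else 0) - (if lab e = 1 then 1 else 0)"
      using assms(2)[of e] by auto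
  qed simp
  then show ?thesis using c[of "\<lambda>e. lab e = 0"] c[of "\<lambda>e. lab e = 1"] by (simp add: sum_subtractf)
qed

lemma lab_invariant:
  fixes f :: "nat \<Rightarrow> nat"
  assumes bij: "bij_betw f {1..n} {1..n}"
  shows "card {e\<in>complete_graph_edges {1..n}. legendre_edge_label p f e = i}
       = card {e\<in>complete_graph_edges {1..n}. legendre_edge_label p (\<lambda>x. x) e = i}"
proof -
  define V where "V = {1..n}"
  define E where "E = complete_graph_edges V"
  let ?phi = "\<lambda>e. f ` e"
  have injV: "inj_on f V" and fV: "f ` V = V" using bij unfolding V_def bij_betw_def by auto
  have Esub: "e \<in> E \<Longrightarrow> e \<subseteq> V \<and> card e = 2" for e unfolding E_def complete_graph_edges_def by auto
  have finE: "finite E"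
  proof -
    have "E \<subseteq> Pow V" using Esub by auto
    then show ?thesis using finite_subset[of E "Pow V"] unfolding V_def by simp
  qed
  have lab: "legendre_edge_label p f e = legendre_edge_label p (\<lambda>x. x) (?phi e)" if "e \<in> E" for e
  proof -
    have "inj_on f e" using Esub[OF that] injV inj_on_subset by blast
    then have "(\<Sum>y\<in>f ` e. y) = (\<Sum>x\<in>e. f x)" by (simp add: sum.reindex)
    then show ?thesis unfolding legendre_edge_label_def by simp
  qed
  have inj: "inj_on ?phi E"
  proof (rule inj_onI)
    fix e1 e2 assume "e1 \<in> E" "e2 \<in> E" "f ` e1 = f ` e2"
    moreover have "e1 \<subseteq> V" "e2 \<subseteq> V" using Esub \<open>e1 \<in> E\<close> \<open>e2 \<in> E\<close> by auto
    ultimately show "e1 = e2" using inj_on_image_eq_iff[OF injV] by simp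
  qed
  have sub: "?phi ` E \<subseteq> E"
  proof
    fix e' assume "e' \<in> ?phi ` E"
    then obtain e where e: "e \<in> E" "e' = f ` e" by blast
    have "inj_on f e" using Esub[OF e(1)] injV inj_on_subset by blast
    then have "card e' = 2" using e Esub[OF e(1)] by (simp add: card_image)
    moreover have "e' \<subseteq> V" using e Esub[OF e(1)] fV by auto
    ultimately show "e' \<in> E" unfolding E_def complete_graph_edges_def by simp
  qed
  have eq: "?phi ` E = E"
    using card_subset_eq[OF finE sub] card_image[OF inj] by simp
  have "{e\<in>E. legendre_edge_label p f e = i} = {e\<in>E. legendre_edge_label p (\<lambda>x. x) (?phi e) = i}"
    using lab by auto
  moreover have "card {e\<in>E. legendre_edge_label p (\<lambda>x. x) (?phi e) = i}
      = card (?phi ` {e\<in>E. legendre_edge_label p (\<lambda>x. x) (?phi e) = i})"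
    by (rule card_image[symmetric]) (rule inj_on_subset[OF inj], auto)
  moreover have "?phi ` {e\<in>E. legendre_edge_label p (\<lambda>x. x) (?phi e) = i} = {e\<in>E. legendre_edge_label p (\<lambda>x. x) e = i}"
  proof
    show "?phi ` {e\<in>E. legendre_edge_label p (\<lambda>x. x) (?phi e) = i} \<subseteq> {e\<in>E. legendre_edge_label p (\<lambda>x. x) e = i}"
      using sub by auto
    show "{e\<in>E. legendre_edge_label p (\<lambda>x. x) e = i} \<subseteq> ?phi ` {e\<in>E. legendre_edge_label p (\<lambda>x. x) (?phi e) = i}"
    proof
      fix e' assume e': "e' \<in> {e\<in>E. legendre_edge_label p (\<lambda>x. x) e = i}"
      then have "e' \<in> ?phi ` E" using eq by simp
      then obtain e where "e \<in> E" "e' = ?phi e" by (rule imageE)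
      then show "e' \<in> ?phi ` {e\<in>E. legendre_edge_label p (\<lambda>x. x) (?phi e) = i}" using e' by auto
    qed
  qed
  ultimately show ?thesis unfolding E_def V_def by simp
qed

lemma graph_iff:
  "legendre_cordial_graph {1..n} (complete_graph_edges {1..n}) p \<longleftrightarrow> \<bar>EE (hh p) n\<bar> \<le> 1"
proof -
  define E where "E = complete_graph_edges {1..n::nat}"
  let ?id = "\<lambda>x::nat. x"
  have finE: "finite E"
  proof -
    have "E \<subseteq> Pow {1..n}" unfolding E_def complete_graph_edges_def by auto
    then show ?thesis using finite_subset by auto
  qed
  have key: "int (card {e\<in>E. legendre_edge_label p ?id e = 0}) - int (card {e\<in>E. legendre_edge_label p ?id e = 1})
       = EE (hh p) n"
  proof -
    have "int (card {e\<in>E. legendre_edge_label p ?id e = 0}) - int (card {e\<in>E. legendre_edge_label p ?id e = 1})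
        = (\<Sum>e\<in>E. if legendre_edge_label p ?id e = 1 then -1 else 1)"
      by (rule card_diff_sum[OF finE]) (auto simp: legendre_edge_label_def)
    also have "\<dots> = (\<Sum>e\<in>E. (\<lambda>m. hl p (int m)) (\<Sum>x\<in>e. x))"
      by (rule sum.cong) (auto simp: legendre_edge_label_def hl_def)
    also have "\<dots> = (\<Sum>b\<in>{1..n}. \<Sum>a\<in>{1..<b}. hl p (int (a + b)))"
      unfolding E_def by (rule edges_sum)
    also have "\<dots> = EE (hl p) n" using EE_as_double_sum[of "hl p" n] by simp
    also have "hl p = hh p" using hl_hh by (intro ext) simp
    finally show ?thesis .
  qed
  have bid: "bij_betw ?id {1..n} {1..card {1..n}}" by (simp add: bij_betw_def)
  show ?thesis
  proof
    assume "legendre_cordial_graph {1..n} (complete_graph_edges {1..n}) p"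
    then obtain f where f: "bij_betw f {1..n} {1..card {1..n}}"
      "\<bar>int (card {e\<in>E. legendre_edge_label p f e = 0}) - int (card {e\<in>E. legendre_edge_label p f e = 1})\<bar> \<le> 1"
      unfolding legendre_cordial_graph_def legendre_cordial_labeling_def E_def by blast
    have fb: "bij_betw f {1..n} {1..n}" using f(1) by simp
    show "\<bar>EE (hh p) n\<bar> \<le> 1"
      using f(2) lab_invariant[OF fb, of p 0] lab_invariant[OF fb, of p 1] key unfolding E_def by simp
  next
    assume "\<bar>EE (hh p) n\<bar> \<le> 1"
    then show "legendre_cordial_graph {1..n} (complete_graph_edges {1..n}) p"
      unfolding legendre_cordial_graph_def legendre_cordial_labeling_def
      using bid key unfolding E_def by (intro exI[of _ ?id]) simp
  qed
qed

lemma sum_remove_zero: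
  fixes f :: "int \<Rightarrow> int"
  assumes "f a = 0" "finite A"
  shows "sum f (A - {a}) = sum f A"
  using assms by (simp add: sum_diff1)

theorem theorem3p3:
  fixes p n :: nat
  assumes "prime p" and "odd p" and "n \<ge> 1"
  shows "legendre_cordial_graph {1..n} (complete_graph_edges {1..n}) p \<longleftrightarrow>
    (let q = int (n div p);
         r = int n - q * int p;
         \<psi> = max 0 (2 * r - int p + 1);
         \<delta> = (\<lambda>s::int. if even s then 1 else (0::int));
         S1 = (\<Sum>s\<in>{2..r+1} - {int p}. (s - 1 - \<delta> s) * Legendre s (int p));
         S2 = (\<Sum>s\<in>{r+2..2*r} - {int p}. (2*r - s + 1 - \<delta> s) * Legendre s (int p));
         S = S1 + S2;
         T = 2 * int n * q - int p * q^2 - q + \<psi>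
     in S = T \<or> S = T + 2 \<or> S = T - 2)"
proof -
  define q where "q = n div p"
  define r where "r = n mod p"
  have n: "n = q * p + r" unfolding q_def r_def by simp
  have rp: "r < p" unfolding r_def using assms(1) prime_gt_0_nat by simp
  have rint: "int n - int q * int p = int r" using n by simp
  define L where "L = (\<lambda>s. Legendre s (int p))"
  have Lp: "Legendre (int p) (int p) = 0" using Legendre_zero_iff by simp
  define S where "S = (\<Sum>s\<in>{2..int r+1}. (s - 1 - (if even s then 1 else 0)) * L s)
       + (\<Sum>s\<in>{int r+2..2*int r}. (2*int r - s + 1 - (if even s then 1 else 0)) * L s)"
  define \<psi> where "\<psi> = max 0 (2 * int r - int p + 1)"
  define T where "T = 2 * int n * int q - int p * (int q)^2 - int q + \<psi>"
  have S_EE: "S = 2 * EE L r" unfolding S_def by (rule G_EE')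
  have psi_EE: "\<psi> = 2 * EE (ind p) r" unfolding \<psi>_def using ind_base[OF assms(2) rp] by simp
  have hh_split: "hh p = (\<lambda>s. ind p s - L s)" unfolding hh_def L_def by (intro ext) simp
  have D: "2 * EE (hh p) n = T - S"
  proof -
    have "2 * EE (hh p) n = 2 * EE (hh p) r + 2 * int q * int r + int p * int q ^ 2 - int q"
      unfolding n by (rule EE_qp[OF assms(1,2)])
    moreover have "EE (hh p) r = EE (ind p) r - EE L r" unfolding hh_split by (rule EE_diff)
    moreover have "T = int p * (int q)^2 + 2 * int q * int r - int q + \<psi>"
      unfolding T_def n by (simp add: algebra_simps power2_eq_square)
    ultimately show ?thesis using S_EE psi_EE by simp
  qed
  have rhs: "(let q = int (n div p);
         r = int n - q * int p;
         \<psi> = max 0 (2 * r - int p + 1);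
         \<delta> = (\<lambda>s::int. if even s then 1 else (0::int));
         S1 = (\<Sum>s\<in>{2..r+1} - {int p}. (s - 1 - \<delta> s) * Legendre s (int p));
         S2 = (\<Sum>s\<in>{r+2..2*r} - {int p}. (2*r - s + 1 - \<delta> s) * Legendre s (int p));
         S = S1 + S2;
         T = 2 * int n * q - int p * q^2 - q + \<psi>
     in S = T \<or> S = T + 2 \<or> S = T - 2) \<longleftrightarrow> (S = T \<or> S = T + 2 \<or> S = T - 2)"
    unfolding Let_def q_def[symmetric] rint S_def T_def \<psi>_def L_def
    by (simp add: sum_remove_zero Lp)
  have fin: "\<bar>d\<bar> \<le> 1 \<longleftrightarrow> (S = T \<or> S = T + 2 \<or> S = T - 2)" if "2 * d = T - S" for d :: int
    using that by (simp add: abs_if) presburger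
  show ?thesis unfolding rhs graph_iff using fin[OF D] .
qed

end
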